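(* Every countably compact hereditarily normal topological group that contains a non-trivial convergent sequence is metrizable.
   Context: All spaces are assumed to be $T_1$. A non-trivial convergent sequence is a subspace homeomorphic to the subspace $\{0\}\cup\{1/n : n=1,2,3,\dots\}$ of the real line. *)

theory Defs
  imports "HOL-Analysis.Analysis" "HOL-Algebra.Group"
begin

definition topological_group :: "('a, 'b) monoid_scheme \<Rightarrow> 'a topology \<Rightarrow> bool" where
  "topological_group G X \<longleftrightarrow>
     group G \<and> topspace X = carrier G \<and>
     continuous_map (prod_topology X X) X (\<lambda>p. fst p \<otimes>\<^bsub>G\<^esub> snd p) \<and>
     continuous_map X X (\<lambda>x. inv\<^bsub>G\<^esub> x)"

definition countably_compact_space :: "'a topology \<Rightarrow> bool" where
  "countably_compact_space X \<longleftrightarrow>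
     (\<forall>\<U>. countable \<U> \<and> (\<forall>U\<in>\<U>. openin X U) \<and> topspace X \<subseteq> \<Union>\<U>
        \<longrightarrow> (\<exists>\<F>\<subseteq>\<U>. finite \<F> \<and> topspace X \<subseteq> \<Union>\<F>))"

definition conv_seq_space :: "real topology" where
  "conv_seq_space = subtopology euclideanreal ({0} \<union> {1 / real n | n. n \<ge> 1})"

definition has_nontrivial_convergent_sequence :: "'a topology \<Rightarrow> bool" where
  "has_nontrivial_convergent_sequence X \<longleftrightarrow>
     (\<exists>S \<subseteq> topspace X. subtopology X S homeomorphic_space conv_seq_space)"

end

theory Submission
  imports Defs
begin

lemma cc_seq_cover:
  fixes f :: "nat \<Rightarrow> 'a set"
  assumes cc: "countably_compact_space X" and o0: "openin X U0" and of: "\<And>n. openin X (f n)"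
    and cov: "topspace X \<subseteq> U0 \<union> (\<Union>n. f n)"
  shows "\<exists>M. topspace X \<subseteq> U0 \<union> (\<Union>n<M. f n)"
proof -
  have c1: "countable (insert U0 (range f))" using countable_image[of UNIV f] by simp
  have c2: "\<forall>U\<in>insert U0 (range f). openin X U" using o0 of by blast
  have c3: "topspace X \<subseteq> \<Union>(insert U0 (range f))" using cov by simp
  obtain F where F: "F \<subseteq> insert U0 (range f)" "finite F" "topspace X \<subseteq> \<Union>F"
    using cc[unfolded countably_compact_space_def, rule_format, OF conjI[OF c1 conjI[OF c2 c3]]] by auto
  have "F - {U0} \<subseteq> f ` UNIV" using F(1) by blast
  then obtain C where C: "finite C" "F - {U0} = f ` C"
    using finite_subset_image[of "F - {U0}" f UNIV] F(2) by blast
  obtain M where M: "C \<subseteq> {..<M}" using finite_nat_bounded[OF C(1)] by blast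
  have "\<Union>F \<subseteq> U0 \<union> \<Union>(f ` C)"
  proof
    fix x assume "x \<in> \<Union>F"
    then obtain U where "U \<in> F" "x \<in> U" by blast
    then show "x \<in> U0 \<union> \<Union>(f ` C)" using C(2) by (cases "U = U0") auto
  qed
  also have "\<dots> \<subseteq> U0 \<union> (\<Union>n<M. f n)"
    by (intro Un_mono[OF order_refl] Union_mono image_mono M)
  finally have "topspace X \<subseteq> U0 \<union> (\<Union>n<M. f n)" using F(3) by (rule order_trans[rotated])
  then show ?thesis by (rule exI)
qed

primrec chainp :: "('a set \<Rightarrow> 'a) \<Rightarrow> nat \<Rightarrow> 'a set" where
  "chainp p 0 = {}"
| "chainp p (Suc n) = insert (p (chainp p n)) (chainp p n)"

lemma chainp_mono: "j \<le> k \<Longrightarrow> chainp p j \<subseteq> chainp p k"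
  by (induction k) (auto simp: le_Suc_eq)

lemma chainp_finite: "finite (chainp p k)"
  by (induction k) auto

locale topgrp = group G for G (structure) + fixes X :: "'a topology"
  assumes top: "topspace X = carrier G"
    and mcont: "continuous_map (prod_topology X X) X (\<lambda>p. fst p \<otimes> snd p)"
    and icont: "continuous_map X X (\<lambda>x. inv x)"
begin

lemma cont_mult:
  assumes "continuous_map X X f" "continuous_map X X g"
  shows "continuous_map X X (\<lambda>x. f x \<otimes> g x)"
proof -
  have "continuous_map X (prod_topology X X) (\<lambda>x. (f x, g x))"
    using assms by (rule continuous_map_pairedI)
  from continuous_map_compose[OF this mcont] show ?thesis by (simp add: o_def)
qed

lemma cont_inv: "continuous_map X X f \<Longrightarrow> continuous_map X X (\<lambda>x. inv (f x))"
  using continuous_map_compose[of X X f X "\<lambda>x. inv x"] icont by (simp add: o_def)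

lemma cont_const: "a \<in> carrier G \<Longrightarrow> continuous_map X X (\<lambda>x. a)"
  by (simp add: top)

lemma cont_id: "continuous_map X X (\<lambda>x. x)"
  by simp

lemma open_pre: "continuous_map X X h \<Longrightarrow> openin X U \<Longrightarrow> openin X {x \<in> carrier G. h x \<in> U}"
  using openin_continuous_map_preimage[of X X h U] top by simp

lemma nbhd_div:
  assumes "openin X U" "\<one> \<in> U"
  obtains W where "openin X W" "\<one> \<in> W" "\<And>a b. a \<in> W \<Longrightarrow> b \<in> W \<Longrightarrow> inv a \<otimes> b \<in> U"
proof -
  have c: "continuous_map (prod_topology X X) X (\<lambda>p. inv (fst p) \<otimes> snd p)"
  proof -
    have "continuous_map (prod_topology X X) X (\<lambda>p. inv (fst p))"
      using continuous_map_compose[OF continuous_map_fst icont] by (simp add: o_def)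
    moreover have "continuous_map (prod_topology X X) (prod_topology X X) (\<lambda>p. (inv (fst p), snd p))"
      using calculation continuous_map_snd[of X X] by (rule continuous_map_pairedI)
    from continuous_map_compose[OF this mcont] show ?thesis by (simp add: o_def)
  qed
  define S where "S = {p \<in> topspace (prod_topology X X). inv (fst p) \<otimes> snd p \<in> U}"
  have So: "openin (prod_topology X X) S"
    unfolding S_def using openin_continuous_map_preimage[OF c assms(1)] .
  have S1: "(\<one>, \<one>) \<in> S"
    unfolding S_def using assms(2) top by (simp add: topspace_prod_topology)
  obtain A B where AB: "openin X A" "openin X B" "\<one> \<in> A" "\<one> \<in> B" "\<And>x y. x \<in> A \<Longrightarrow> y \<in> B \<Longrightarrow> (x,y) \<in> S"
  proof -
    from So S1 obtain A B where "openin X A" "openin X B" "\<one> \<in> A" "\<one> \<in> B" "A \<times> B \<subseteq> S"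
      unfolding openin_prod_topology_alt by meson
    then show ?thesis using that by (metis SigmaI subsetD)
  qed
  show ?thesis
  proof (rule that)
    show "openin X (A \<inter> B)" using AB by blast
    show "\<one> \<in> A \<inter> B" using AB by blast
    show "inv a \<otimes> b \<in> U" if "a \<in> A \<inter> B" "b \<in> A \<inter> B" for a b
    proof -
      have "(a,b) \<in> S" using AB(5) that by blast
      then show ?thesis unfolding S_def by simp
    qed
  qed
qed

end

context topgrp begin

lemma cont_lt: "a \<in> carrier G \<Longrightarrow> continuous_map X X (\<lambda>y. inv a \<otimes> y)"
  by (intro cont_mult cont_const cont_id) simp

lemma open_lt: "a \<in> carrier G \<Longrightarrow> openin X V \<Longrightarrow> openin X {y \<in> carrier G. inv a \<otimes> y \<in> V}"
  by (intro open_pre cont_lt)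

lemma total_bounded:
  assumes cc: "countably_compact_space X" and V: "openin X V" "\<one> \<in> V"
  shows "\<exists>F. finite F \<and> F \<subseteq> carrier G \<and> (\<forall>y\<in>carrier G. \<exists>d\<in>F. inv d \<otimes> y \<in> V)"
proof (rule ccontr)
  assume nt: "\<not> ?thesis"
  have H: "\<exists>y. y \<in> carrier G \<and> (\<forall>d\<in>F. inv d \<otimes> y \<notin> V)" if "finite F" "F \<subseteq> carrier G" for F
  proof -
    have "\<not> (\<forall>y\<in>carrier G. \<exists>d\<in>F. inv d \<otimes> y \<in> V)" using nt that by auto
    then show ?thesis by auto
  qed
  define pick where "pick F = (SOME y. y \<in> carrier G \<and> (\<forall>d\<in>F. inv d \<otimes> y \<notin> V))" for F
  have pick: "pick F \<in> carrier G \<and> (\<forall>d\<in>F. inv d \<otimes> pick F \<notin> V)"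
    if "finite F" "F \<subseteq> carrier G" for F
    unfolding pick_def using someI_ex[OF H[OF that]] .
  define C where "C = chainp pick"
  have Csub: "C k \<subseteq> carrier G" for k
  proof (induction k)
    case 0 then show ?case by (simp add: C_def)
  next
    case (Suc k)
    then show ?case using pick[OF chainp_finite[of pick k]] by (simp add: C_def)
  qed
  define g where "g k = pick (C k)" for k
  have g: "g k \<in> carrier G" "\<And>d. d \<in> C k \<Longrightarrow> inv d \<otimes> g k \<notin> V" for k
    using pick[OF chainp_finite[of pick k] Csub[of k, unfolded C_def]] unfolding g_def C_def by auto
  have gC: "g j \<in> C k" if "j < k" for j k
  proof -
    have "g j \<in> C (Suc j)" by (simp add: g_def C_def)
    also have "\<dots> \<subseteq> C k" unfolding C_def by (rule chainp_mono) (use that in linarith)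
    finally show ?thesis .
  qed
  define D where "D = range g"
  have Dsub: "D \<subseteq> topspace X" using g(1) top by (auto simp: D_def)
  define f where "f k = {y \<in> carrier G. inv (g k) \<otimes> y \<in> V}" for k
  have fo: "openin X (f k)" for k unfolding f_def using open_lt[OF g(1) V(1)] .
  have o0: "openin X (topspace X - X closure_of D)" by (intro openin_diff openin_topspace closedin_closure_of)
  have cov: "topspace X \<subseteq> (topspace X - X closure_of D) \<union> (\<Union>n. f n)"
  proof
    fix y assume y: "y \<in> topspace X"
    show "y \<in> (topspace X - X closure_of D) \<union> (\<Union>n. f n)"
    proof (cases "y \<in> X closure_of D")
      case False then show ?thesis using y by blast
    next
      case True
      define N where "N = {z \<in> carrier G. inv z \<otimes> y \<in> V}"
      have "openin X N" unfolding N_def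
        using y top by (intro open_pre cont_mult cont_inv cont_id cont_const V(1)) auto
      moreover have "y \<in> N" using y top V(2) by (simp add: N_def)
      ultimately obtain z where "z \<in> D" "z \<in> N" using True unfolding in_closure_of by blast
      then obtain k where "inv (g k) \<otimes> y \<in> V" by (auto simp: D_def N_def)
      then have "y \<in> f k" using y top by (simp add: f_def)
      then show ?thesis by blast
    qed
  qed
  obtain M where M: "topspace X \<subseteq> (topspace X - X closure_of D) \<union> (\<Union>n<M. f n)"
    using cc_seq_cover[OF cc o0 fo cov] by blast
  have "g M \<in> X closure_of D"
    using closure_of_subset[OF Dsub] by (auto simp: D_def)
  moreover have "g M \<in> topspace X" using g(1) top by simp
  ultimately obtain k where "k < M" "g M \<in> f k" using M by blast
  then show False using g(2)[OF gC[OF \<open>k < M\<close>]] by (simp add: f_def)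
qed

end


context topgrp begin

lemma local_base:
  fixes Q :: "nat \<Rightarrow> 'a set"
  assumes cc: "countably_compact_space X" and reg: "regular_space X"
    and Q: "\<And>n. openin X (Q n)" "\<And>n. \<one> \<in> Q n"
    and Qint: "\<And>y. y \<in> carrier G \<Longrightarrow> (\<forall>n. y \<in> Q n) \<Longrightarrow> y = \<one>"
  obtains V :: "nat \<Rightarrow> 'a set" where "\<And>n. openin X (V n)" "\<And>n. \<one> \<in> V n"
    "\<And>U. openin X U \<Longrightarrow> \<one> \<in> U \<Longrightarrow> \<exists>n. V n \<subseteq> U"
proof -
  have "\<exists>P. openin X P \<and> \<one> \<in> P \<and> X closure_of P \<subseteq> Q n" for n
  proof -
    have "closedin X (topspace X - Q n)" using Q(1) by blast
    moreover have "\<one> \<in> topspace X - (topspace X - Q n)" using Q(2) top by simp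
    ultimately obtain P where P: "openin X P" "\<one> \<in> P" "disjnt (topspace X - Q n) (X closure_of P)"
      using reg unfolding regular_space by meson
    have "X closure_of P \<subseteq> Q n"
      using P(3) closure_of_subset_topspace[of X P] unfolding disjnt_def by blast
    then show ?thesis using P by blast
  qed
  then obtain P where P: "\<And>n. openin X (P n)" "\<And>n. \<one> \<in> P n" "\<And>n. X closure_of (P n) \<subseteq> Q n"
    by metis
  define V where "V n = \<Inter> (P ` {..n})" for n
  have Vo: "openin X (V n)" for n unfolding V_def
    by (rule openin_Inter) (use P(1) in auto)
  have V1: "\<one> \<in> V n" for n using P(2) by (simp add: V_def)
  have Vmono: "V n \<subseteq> V m" if "m \<le> n" for m n
    unfolding V_def using that by (intro Inter_anti_mono image_mono) auto
  have VP: "V n \<subseteq> P n" for n unfolding V_def by auto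
  show ?thesis
  proof (rule that[OF Vo V1])
    fix U assume U: "openin X U" "\<one> \<in> U"
    define f where "f n = topspace X - X closure_of (V n)" for n
    have fo: "openin X (f n)" for n unfolding f_def
      by (intro openin_diff openin_topspace closedin_closure_of)
    have cov: "topspace X \<subseteq> U \<union> (\<Union>n. f n)"
    proof
      fix y assume y: "y \<in> topspace X"
      show "y \<in> U \<union> (\<Union>n. f n)"
      proof (cases "y \<in> U")
        case True then show ?thesis by blast
      next
        case False
        then have "y \<noteq> \<one>" using U by auto
        then obtain n where "y \<notin> Q n" using Qint y top by auto
        then have "y \<notin> X closure_of (P n)" using P(3) by auto
        moreover have "X closure_of (V n) \<subseteq> X closure_of (P n)" by (rule closure_of_mono[OF VP])
        ultimately have "y \<in> f n" using y by (auto simp: f_def)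
        then show ?thesis by blast
      qed
    qed
    obtain M where M: "topspace X \<subseteq> U \<union> (\<Union>n<M. f n)"
      using cc_seq_cover[OF cc U(1) fo cov] by blast
    have "V M \<subseteq> U"
    proof
      fix y assume y: "y \<in> V M"
      then have yt: "y \<in> topspace X" using openin_subset[OF Vo] by blast
      have "y \<notin> f n" if "n < M" for n
      proof -
        have "y \<in> V n" using Vmono[of n M] that y by auto
        then have "y \<in> X closure_of (V n)" using closure_of_subset[OF openin_subset[OF Vo]] by blast
        then show ?thesis by (simp add: f_def)
      qed
      then show "y \<in> U" using M yt by blast
    qed
    then show "\<exists>n. V n \<subseteq> U" by blast
  qed
qed

lemma second_countable_grp:
  fixes V :: "nat \<Rightarrow> 'a set"
  assumes cc: "countably_compact_space X"
    and V: "\<And>n. openin X (V n)" "\<And>n. \<one> \<in> V n"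
    and Vb: "\<And>U. openin X U \<Longrightarrow> \<one> \<in> U \<Longrightarrow> \<exists>n. V n \<subseteq> U"
  shows "second_countable X"
proof -
  have "\<exists>F. finite F \<and> F \<subseteq> carrier G \<and> (\<forall>y\<in>carrier G. \<exists>d\<in>F. inv d \<otimes> y \<in> V n)" for n
    using total_bounded[OF cc V(1) V(2)] .
  then obtain F where F: "\<And>n. finite (F n)" "\<And>n. F n \<subseteq> carrier G"
    "\<And>n y. y \<in> carrier G \<Longrightarrow> \<exists>d\<in>F n. inv d \<otimes> y \<in> V n"
    by metis
  define B where "B = (\<Union>n. (\<lambda>d. {y \<in> carrier G. inv d \<otimes> y \<in> V n}) ` F n)"
  have cB: "countable B" unfolding B_def
    using F(1) by (intro countable_UN countable_image) (auto intro: countable_finite)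
  moreover have oB: "\<forall>W\<in>B. openin X W"
    unfolding B_def using F(2) open_lt V(1) by blast
  moreover have bB: "\<exists>W\<in>B. x \<in> W \<and> W \<subseteq> U" if U: "openin X U" "x \<in> U" for U x
  proof -
    have x: "x \<in> carrier G" using U openin_subset top by blast
    define U' where "U' = {y \<in> carrier G. x \<otimes> y \<in> U}"
    have "openin X U'" unfolding U'_def
      using x U(1) by (intro open_pre cont_mult cont_const cont_id) auto
    moreover have "\<one> \<in> U'" using x U(2) by (simp add: U'_def)
    ultimately obtain m where m: "V m \<subseteq> U'" using Vb by blast
    obtain W where W: "openin X W" "\<one> \<in> W" "\<And>a b. a \<in> W \<Longrightarrow> b \<in> W \<Longrightarrow> inv a \<otimes> b \<in> V m"
      using nbhd_div[OF V(1) V(2)] by metis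
    obtain n where n: "V n \<subseteq> W" using Vb[OF W(1) W(2)] by blast
    obtain d where d: "d \<in> F n" "inv d \<otimes> x \<in> V n" using F(3)[OF x] by blast
    have dc: "d \<in> carrier G" using d(1) F(2) by blast
    have "{y \<in> carrier G. inv d \<otimes> y \<in> V n} \<subseteq> U"
    proof
      fix y assume y: "y \<in> {y \<in> carrier G. inv d \<otimes> y \<in> V n}"
      then have yc: "y \<in> carrier G" and yV: "inv d \<otimes> y \<in> V n" by auto
      have "inv (inv d \<otimes> x) \<otimes> (inv d \<otimes> y) \<in> V m"
        using W(3) n d(2) yV by blast
      moreover have "inv (inv d \<otimes> x) \<otimes> (inv d \<otimes> y) = inv x \<otimes> y"
        using dc x yc by (simp add: inv_mult_group m_assoc[symmetric]) (simp add: m_assoc)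
      ultimately have "inv x \<otimes> y \<in> U'" using m by auto
      then have "x \<otimes> (inv x \<otimes> y) \<in> U" by (simp add: U'_def)
      then show "y \<in> U" using x yc by (simp add: m_assoc[symmetric])
    qed
    moreover have "x \<in> {y \<in> carrier G. inv d \<otimes> y \<in> V n}" using x d by simp
    moreover have "{y \<in> carrier G. inv d \<otimes> y \<in> V n} \<in> B" unfolding B_def using d(1) by blast
    ultimately show ?thesis by (intro bexI[of _ "{y \<in> carrier G. inv d \<otimes> y \<in> V n}"] conjI)
  qed
  show ?thesis unfolding second_countable_def
    by (rule exI[of _ B]) (use cB oB bB in auto)
qed

end


context topgrp begin

lemma pseudo_at:
  fixes x :: "nat \<Rightarrow> 'a"
  assumes H: "Hausdorff_space X" and hn: "hereditarily normal_space X"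
    and xc: "\<And>k. x k \<in> carrier G" and pc: "p \<in> carrier G" and xp: "\<And>k. x k \<noteq> p"
    and lim: "limitin X x p sequentially"
    and cl: "X closure_of (range x) \<subseteq> insert p (range x)"
  shows "\<exists>Q::nat \<Rightarrow> 'a set. (\<forall>n. openin X (Q n)) \<and> (\<forall>n. p \<in> Q n) \<and>
            (\<forall>y\<in>carrier G. (\<forall>n. y \<in> Q n) \<longrightarrow> y = p)"
proof -
  have "\<exists>P R. openin X P \<and> openin X R \<and> x k \<in> P \<and> p \<in> R \<and> disjnt P R" for k
    using H xc pc xp top unfolding Hausdorff_space_def by metis
  then obtain P R where PR: "\<And>k. openin X (P k)" "\<And>k. openin X (R k)" "\<And>k. x k \<in> P k"
    "\<And>k. p \<in> R k" "\<And>k. disjnt (P k) (R k)"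
    by metis
  define N where "N = topspace X - (\<Union>k. P k)"
  have Nc: "closedin X N" unfolding N_def
    using PR(1) by (intro closedin_diff closedin_topspace openin_Union) auto
  have xN: "x k \<notin> N" for k using PR(3) by (auto simp: N_def)
  define A where "A = N - {p}"
  define B where "B = range x"
  have sep: "separatedin X A B"
    unfolding separatedin_def
  proof (intro conjI)
    show "A \<subseteq> topspace X" by (auto simp: A_def N_def)
    show "B \<subseteq> topspace X" using xc top by (auto simp: B_def)
    show "A \<inter> X closure_of B = {}"
    proof -
      have "A \<inter> insert p (range x) = {}" using xN by (auto simp: A_def)
      then show ?thesis using cl unfolding B_def by blast
    qed
    show "B \<inter> X closure_of A = {}"
    proof -
      have "X closure_of A \<subseteq> N" unfolding A_def using Nc
        by (intro closure_of_minimal) auto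
      then show ?thesis using xN unfolding B_def by blast
    qed
  qed
  obtain U V where UV: "openin X U" "openin X V" "A \<subseteq> U" "B \<subseteq> V" "disjnt U V"
    using hn sep unfolding hereditarily_normal_separation by metis
  define W where "W k = {y \<in> carrier G. x k \<otimes> (inv p \<otimes> y) \<in> V}" for k
  have Wo: "openin X (W k)" for k unfolding W_def
    using xc pc UV(2) by (intro open_pre cont_mult cont_const cont_id) auto
  have pW: "p \<in> W k" for k
  proof -
    have "x k \<otimes> (inv p \<otimes> p) = x k" using xc pc by simp
    moreover have "x k \<in> V" using UV(4) by (auto simp: B_def)
    ultimately show ?thesis using pc by (simp add: W_def)
  qed
  define Q where "Q k = R k \<inter> W k" for k
  have "\<forall>n. openin X (Q n)" using PR(2) Wo by (auto simp: Q_def)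
  moreover have "\<forall>n. p \<in> Q n" using PR(4) pW by (auto simp: Q_def)
  moreover have "y = p" if y: "y \<in> carrier G" and yQ: "\<forall>n. y \<in> Q n" for y
  proof (rule ccontr)
    assume yp: "y \<noteq> p"
    have "y \<notin> P k" for k using yQ PR(5)[of k] unfolding Q_def disjnt_def by blast
    then have "y \<in> N" using y top by (auto simp: N_def)
    then have yU: "y \<in> U" using yp UV(3) by (auto simp: A_def)
    have g: "continuous_map X X (\<lambda>z. z \<otimes> (inv p \<otimes> y))"
      using pc y by (intro cont_mult cont_id cont_const) auto
    have "limitin X ((\<lambda>z. z \<otimes> (inv p \<otimes> y)) \<circ> x) (p \<otimes> (inv p \<otimes> y)) sequentially"
      by (rule continuous_map_limit[OF g lim])
    moreover have "p \<otimes> (inv p \<otimes> y) = y" using pc y by (simp add: m_assoc[symmetric])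
    ultimately have "limitin X (\<lambda>k. x k \<otimes> (inv p \<otimes> y)) y sequentially" by (simp add: o_def)
    then have "eventually (\<lambda>k. x k \<otimes> (inv p \<otimes> y) \<in> U) sequentially"
      using UV(1) yU unfolding limitin_def by blast
    then obtain k where k: "x k \<otimes> (inv p \<otimes> y) \<in> U"
      unfolding eventually_sequentially by blast
    moreover have "x k \<otimes> (inv p \<otimes> y) \<in> V" using yQ by (auto simp: Q_def W_def)
    ultimately show False using UV(5) unfolding disjnt_def by blast
  qed
  ultimately show ?thesis by blast
qed

lemma pseudo_one:
  fixes Q :: "nat \<Rightarrow> 'a set"
  assumes pc: "p \<in> carrier G" and Q: "\<forall>n. openin X (Q n)" "\<forall>n. p \<in> Q n"
    "\<forall>y\<in>carrier G. (\<forall>n. y \<in> Q n) \<longrightarrow> y = p"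
  obtains Q' :: "nat \<Rightarrow> 'a set" where "\<And>n. openin X (Q' n)" "\<And>n. \<one> \<in> Q' n"
    "\<And>y. y \<in> carrier G \<Longrightarrow> (\<forall>n. y \<in> Q' n) \<Longrightarrow> y = \<one>"
proof
  define Q' where "Q' n = {y \<in> carrier G. p \<otimes> y \<in> Q n}" for n
  show "openin X (Q' n)" for n unfolding Q'_def
    using pc Q(1) by (intro open_pre cont_mult cont_const cont_id) auto
  show "\<one> \<in> Q' n" for n using pc Q(2) by (simp add: Q'_def)
  show "y = \<one>" if "y \<in> carrier G" "\<forall>n. y \<in> Q' n" for y
  proof -
    have "p \<otimes> y = p" using Q(3) that pc by (simp add: Q'_def)
    then show ?thesis using pc that(1) by simp
  qed
qed

end


lemma cc_compact:
  assumes sc: "second_countable X" and cc: "countably_compact_space X"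
  shows "compact_space X"
  unfolding compact_space_alt
proof (intro allI impI)
  fix \<U> assume U: "(\<forall>U\<in>\<U>. openin X U) \<and> topspace X \<subseteq> \<Union>\<U>"
  have L: "Lindelof_space X" using sc by (rule second_countable_imp_Lindelof_space)
  have "\<Union>\<U> = topspace X" using U openin_subset by blast
  then obtain \<V> where V: "countable \<V>" "\<V> \<subseteq> \<U>" "\<Union>\<V> = topspace X"
    using L U unfolding Lindelof_space_def by meson
  have "countable \<V> \<and> (\<forall>U\<in>\<V>. openin X U) \<and> topspace X \<subseteq> \<Union>\<V>" using V U by blast
  then obtain \<F> where "\<F> \<subseteq> \<V>" "finite \<F>" "topspace X \<subseteq> \<Union>\<F>"
    using cc unfolding countably_compact_space_def by meson
  then show "\<exists>\<F>. finite \<F> \<and> \<F> \<subseteq> \<U> \<and> topspace X \<subseteq> \<Union>\<F>" using V(2) by blast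
qed

lemma metrizable_from_sc:
  assumes sc: "second_countable X" and cc: "countably_compact_space X"
    and nor: "normal_space X" and t1: "t1_space X"
  shows "metrizable_space X"
proof -
  have reg: "regular_space X" using nor t1 by (rule normal_t1_imp_regular_space)
  have cpt: "compact_space X" using sc cc by (rule cc_compact)
  obtain \<B> where B: "countable \<B>" "\<And>V. V \<in> \<B> \<Longrightarrow> openin X V"
    "\<And>U x. openin X U \<Longrightarrow> x \<in> U \<Longrightarrow> \<exists>V \<in> \<B>. x \<in> V \<and> V \<subseteq> U"
    using sc unfolding second_countable_def by metis
  define I where "I = (insert {} \<B>) \<times> (insert {} \<B>)"
  have cI: "countable I" using B(1) by (simp add: I_def)
  have nI: "I \<noteq> {}" by (simp add: I_def)
  define P where "P p f \<longleftrightarrow> continuous_map X (top_of_set {0..1::real}) f \<and>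
      (openin X (snd p) \<and> X closure_of (fst p) \<subseteq> snd p \<longrightarrow>
         f ` (X closure_of (fst p)) \<subseteq> {0} \<and> f ` (topspace X - snd p) \<subseteq> {1})" for p f
  have exP: "\<exists>f. P p f" for p
  proof (cases "openin X (snd p) \<and> X closure_of (fst p) \<subseteq> snd p")
    case True
    have "closedin X (X closure_of (fst p))" by simp
    moreover have "closedin X (topspace X - snd p)" using True by blast
    moreover have "disjnt (X closure_of (fst p)) (topspace X - snd p)"
      using True unfolding disjnt_def by blast
    ultimately obtain f where "continuous_map X (top_of_set {0..1::real}) f"
      "f ` (X closure_of (fst p)) \<subseteq> {0}" "f ` (topspace X - snd p) \<subseteq> {1}"
      using Urysohn_lemma[OF nor, of "X closure_of (fst p)" "topspace X - snd p" 0 1] by auto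
    then show ?thesis unfolding P_def by blast
  next
    case False
    have "continuous_map X (top_of_set {0..1::real}) (\<lambda>x. 0)" by simp
    then show ?thesis using False unfolding P_def by blast
  qed
  define u where "u p = (SOME f. P p f)" for p
  have uP: "P p (u p)" for p unfolding u_def using someI_ex[OF exP] .
  have ucont: "continuous_map X euclideanreal (u p)" for p
    using uP[of p] unfolding P_def continuous_map_in_subtopology by blast
  define F where "F x = (\<lambda>k. u (from_nat_into I k) x)" for x
  have Fc: "continuous_map X (powertop_real UNIV) F"
    unfolding F_def continuous_map_componentwise_UNIV using ucont by blast
  have Finj: "inj_on F (topspace X)"
  proof (rule inj_onI)
    fix x y assume x: "x \<in> topspace X" and y: "y \<in> topspace X" and eq: "F x = F y"
    show "x = y"
    proof (rule ccontr)
      assume xy: "x \<noteq> y"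
      have "openin X (topspace X - {y})"
        using t1 y unfolding t1_space_closedin_singleton by blast
      then obtain B2 where B2: "B2 \<in> \<B>" "x \<in> B2" "B2 \<subseteq> topspace X - {y}"
        using B(3) x xy by blast
      have "closedin X (topspace X - B2)" using B(2)[OF B2(1)] by blast
      then obtain W where W: "openin X W" "x \<in> W" "disjnt (topspace X - B2) (X closure_of W)"
        using reg x B2(2) unfolding regular_space by (metis DiffD2 DiffI)
      obtain B1 where B1: "B1 \<in> \<B>" "x \<in> B1" "B1 \<subseteq> W" using B(3)[OF W(1) W(2)] by blast
      have "X closure_of B1 \<subseteq> X closure_of W" using B1(3) by (rule closure_of_mono)
      also have "\<dots> \<subseteq> B2" using W(3) closure_of_subset_topspace[of X W]
        unfolding disjnt_def by blast
      finally have cl: "X closure_of B1 \<subseteq> B2" .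
      define p where "p = (B1, B2)"
      have pI: "p \<in> I" using B1(1) B2(1) by (simp add: p_def I_def)
      have Pp: "u p ` (X closure_of B1) \<subseteq> {0}" "u p ` (topspace X - B2) \<subseteq> {1}"
        using uP[of p] B(2)[OF B2(1)] cl unfolding P_def p_def by auto
      have "x \<in> X closure_of B1" using closure_of_subset[of B1 X] B1 openin_subset[OF B(2)[OF B1(1)]]
        by blast
      then have ux: "u p x = 0" using Pp(1) by blast
      have "y \<in> topspace X - B2" using y B2(3) by blast
      then have uy: "u p y = 1" using Pp(2) by blast
      have "F x (to_nat_on I p) = u p x" unfolding F_def using cI pI by simp
      moreover have "F y (to_nat_on I p) = u p y" unfolding F_def using cI pI by simp
      ultimately show False using eq ux uy by simp
    qed
  qed
  have H: "Hausdorff_space (powertop_real (UNIV::nat set))"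
    by (simp add: Hausdorff_space_product_topology)
  have "closed_map X (powertop_real UNIV) F"
    using Fc cpt H by (rule continuous_imp_closed_map)
  then have "embedding_map X (powertop_real UNIV) F"
    using Fc Finj by (intro injective_closed_imp_embedding_map)
  then have hom: "X homeomorphic_space subtopology (powertop_real UNIV) (F ` topspace X)"
    by (rule embedding_map_imp_homeomorphic_space)
  have "metrizable_space (powertop_real (UNIV::nat set))"
    by (simp add: metrizable_space_product_topology metrizable_space_euclidean)
  then have "metrizable_space (subtopology (powertop_real UNIV) (F ` topspace X))"
    by (rule metrizable_space_subtopology)
  then show ?thesis using homeomorphic_metrizable_space[OF hom] by simp
qed



lemma get_sequence:
  assumes h: "has_nontrivial_convergent_sequence X" and H: "Hausdorff_space X"
  obtains x :: "nat \<Rightarrow> 'a" and p where "\<And>k. x k \<in> topspace X" "p \<in> topspace X"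
    "\<And>k. x k \<noteq> p" "limitin X x p sequentially"
    "X closure_of (range x) \<subseteq> insert p (range x)"
proof -
  obtain S where S: "S \<subseteq> topspace X" "subtopology X S homeomorphic_space conv_seq_space"
    using h unfolding has_nontrivial_convergent_sequence_def by blast
  then obtain \<phi> \<psi> where hm: "homeomorphic_maps conv_seq_space (subtopology X S) \<phi> \<psi>"
    using homeomorphic_space_sym unfolding homeomorphic_space_def by metis
  define T where "T = ({0} \<union> {1 / real n | n. n \<ge> 1})"
  have tT: "topspace conv_seq_space = T" by (simp add: conv_seq_space_def T_def)
  define a where "a k = 1 / real (Suc k)" for k
  have aT: "a k \<in> T" for k unfolding T_def a_def by force
  have Teq: "T = insert 0 (range a)"
  proof
    show "T \<subseteq> insert 0 (range a)"
    proof
      fix t assume "t \<in> T"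
      then consider "t = 0" | n where "n \<ge> 1" "t = 1 / real n" unfolding T_def by blast
      then show "t \<in> insert 0 (range a)"
      proof cases
        case 2
        then have "t = a (n - 1)" by (simp add: a_def)
        then show ?thesis by blast
      qed simp
    qed
    show "insert 0 (range a) \<subseteq> T" using aT by (auto simp: T_def)
  qed
  have alim: "a \<longlonglongrightarrow> 0"
    using LIMSEQ_inverse_real_of_nat unfolding a_def by (simp add: inverse_eq_divide)
  have cs: "conv_seq_space = subtopology euclideanreal T" by (simp add: conv_seq_space_def T_def)
  have T0: "0 \<in> T" by (simp add: T_def)
  have alim': "limitin conv_seq_space a 0 sequentially"
    unfolding cs limitin_subtopology using alim aT T0 by (simp add: always_eventually)
  have phic: "continuous_map conv_seq_space (subtopology X S) \<phi>"
    using hm unfolding homeomorphic_maps_def by blast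
  then have phic': "continuous_map conv_seq_space X \<phi>"
    using continuous_map_in_subtopology by blast
  have inj: "\<psi> (\<phi> t) = t" if "t \<in> T" for t
    using hm that tT unfolding homeomorphic_maps_def by blast
  define x where "x k = \<phi> (a k)" for k
  define p where "p = \<phi> 0"
  have xt: "x k \<in> topspace X" for k
    using phic' aT tT unfolding x_def continuous_map_def by blast
  have "0 \<in> T" by (simp add: T_def)
  then have pt: "p \<in> topspace X"
    using phic' tT unfolding p_def continuous_map_def by blast
  have xp: "x k \<noteq> p" for k
  proof
    assume "x k = p"
    then have "\<psi> (\<phi> (a k)) = \<psi> (\<phi> 0)" by (simp add: x_def p_def)
    then have "a k = 0" using inj aT \<open>0 \<in> T\<close> by simp
    then show False by (simp add: a_def)
  qed
  have lim: "limitin X x p sequentially"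
    using continuous_map_limit[OF phic' alim'] unfolding x_def p_def o_def by simp
  have "compact T" unfolding Teq by (rule compact_sequence_with_limit[OF alim])
  then have "compact_space conv_seq_space"
    unfolding cs by (intro compact_space_subtopology) simp
  then have "compactin X (\<phi> ` topspace conv_seq_space)"
    using phic' image_compactin compact_space_def by blast
  then have "closedin X (\<phi> ` T)" using H tT compactin_imp_closedin by metis
  moreover have "\<phi> ` T = insert p (range x)" unfolding Teq x_def p_def by auto
  ultimately have "closedin X (insert p (range x))" by simp
  then have "X closure_of (range x) \<subseteq> insert p (range x)"
    by (intro closure_of_minimal) auto
  then show ?thesis using that xt pt xp lim by blast
qed



theorem corollary2p5:
  fixes G :: "('a, 'b) monoid_scheme" and X :: "'a topology"
  assumes "topological_group G X"
    and "t1_space X"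
    and "countably_compact_space X"
    and "hereditarily normal_space X"
    and "has_nontrivial_convergent_sequence X"
  shows "metrizable_space X"
proof -
  interpret topgrp G X
    using assms(1) unfolding topological_group_def topgrp_def topgrp_axioms_def by blast
  have nor: "normal_space X" using assms(4) by (rule hereditarily_inc)
  have reg: "regular_space X" using nor assms(2) by (rule normal_t1_imp_regular_space)
  have Haus: "Hausdorff_space X" using reg assms(2) by (rule regular_t1_imp_Hausdorff_space)
  obtain x :: "nat \<Rightarrow> 'a" and p where xp: "\<And>k. x k \<in> topspace X" "p \<in> topspace X"
    "\<And>k. x k \<noteq> p" "limitin X x p sequentially"
    "X closure_of (range x) \<subseteq> insert p (range x)"
    using get_sequence[OF assms(5) Haus] by metis
  obtain Q :: "nat \<Rightarrow> 'a set" where Q: "\<forall>n. openin X (Q n)" "\<forall>n. p \<in> Q n"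
    "\<forall>y\<in>carrier G. (\<forall>n. y \<in> Q n) \<longrightarrow> y = p"
    using pseudo_at[OF Haus assms(4), of x p] xp top by metis
  obtain Q' :: "nat \<Rightarrow> 'a set" where Q': "\<And>n. openin X (Q' n)" "\<And>n. \<one>\<^bsub>G\<^esub> \<in> Q' n"
    "\<And>y. y \<in> carrier G \<Longrightarrow> (\<forall>n. y \<in> Q' n) \<Longrightarrow> y = \<one>\<^bsub>G\<^esub>"
    using pseudo_one[of p Q] Q xp(2) top by metis
  obtain V :: "nat \<Rightarrow> 'a set" where V: "\<And>n. openin X (V n)" "\<And>n. \<one>\<^bsub>G\<^esub> \<in> V n"
    "\<And>U. openin X U \<Longrightarrow> \<one>\<^bsub>G\<^esub> \<in> U \<Longrightarrow> \<exists>n. V n \<subseteq> U"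
    using local_base[where Q=Q', OF assms(3) reg Q'(1) Q'(2) Q'(3)] by metis
  have sc: "second_countable X"
    using second_countable_grp[OF assms(3) V(1) V(2) V(3)] by blast
  show ?thesis using metrizable_from_sc[OF sc assms(3) nor assms(2)] .
qed

end
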